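(* Let $\langle H,M,T\rangle$ be an abduction instance, let $X$ be the set of variables of $T$, let $\Pi(H\cup X)=\{\gamma_1,\ldots,\gamma_k\}$, and let $C=\{c_1,\ldots,c_k\}$, $D=\{d_1,\ldots,d_k\}$ be sets of fresh variables. Define $f(\langle H,M,T\rangle)=\langle H',M',T'\rangle$ where $H'=H\cup C\cup D$, $M'=M\cup\{c_i\mid \gamma_i\in T\}\cup\{d_i\mid\gamma_i\notin T\}$, and $T'=\{\neg c_i\vee\neg d_i\mid \gamma_i\in\Pi(H\cup X)\}\cup\{c_i\rightarrow\gamma_i\mid\gamma_i\in\Pi(H\cup X)\}$. Then \[SOL(f(\langle H,M,T\rangle))=\{S\cup\{c_i\mid\gamma_i\in T\}\cup\{d_i\mid\gamma_i\notin T\}\mid S\in SOL(\langle H,M,T\rangle)\}.\]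
   Context: An abduction instance is a triple $\langle H,M,T\rangle$ where $T$ is a propositional theory in 3CNF (so $T\subseteq\Pi(V)$ for $V$ the variables of $T$), $H$ is a set of propositional variables and $M$ a set of propositional variables. $SOL(\langle H,M,T\rangle)=\{H'\subseteq H\mid H'\cup T\text{ consistent and } H'\cup T\models M\}$. For a set of variables $Y$, $\Pi(Y)$ denotes the set of all distinct clauses of three literals over $Y$. *)

theory Defs
  imports Main
begin

datatype 'v lit = Pos 'v | Neg 'v

type_synonym 'v clause = "'v lit set"

fun lvar :: "'v lit \<Rightarrow> 'v" where
  "lvar (Pos v) = v" | "lvar (Neg v) = v"

fun lit_sat :: "('v \<Rightarrow> bool) \<Rightarrow> 'v lit \<Rightarrow> bool" where
  "lit_sat \<sigma> (Pos v) = \<sigma> v" | "lit_sat \<sigma> (Neg v) = (\<not> \<sigma> v)"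

definition clause_sat :: "('v \<Rightarrow> bool) \<Rightarrow> 'v clause \<Rightarrow> bool" where
  "clause_sat \<sigma> C \<longleftrightarrow> (\<exists>l\<in>C. lit_sat \<sigma> l)"

definition models :: "('v \<Rightarrow> bool) \<Rightarrow> 'v clause set \<Rightarrow> bool" where
  "models \<sigma> F \<longleftrightarrow> (\<forall>C\<in>F. clause_sat \<sigma> C)"

definition consistent :: "'v clause set \<Rightarrow> bool" where
  "consistent F \<longleftrightarrow> (\<exists>\<sigma>. models \<sigma> F)"

definition entails_vars :: "'v clause set \<Rightarrow> 'v set \<Rightarrow> bool" where
  "entails_vars F M \<longleftrightarrow> (\<forall>\<sigma>. models \<sigma> F \<longrightarrow> (\<forall>m\<in>M. \<sigma> m))"

definition facts :: "'v set \<Rightarrow> 'v clause set" where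
  "facts A = (\<lambda>a. {Pos a}) ` A"

definition vars :: "'v clause set \<Rightarrow> 'v set" where
  "vars T = (\<Union>C\<in>T. lvar ` C)"

definition Pi3 :: "'v set \<Rightarrow> 'v clause set" where
  "Pi3 Y = {C. card C = 3 \<and> lvar ` C \<subseteq> Y}"

definition abduction_instance :: "'v set \<Rightarrow> 'v set \<Rightarrow> 'v clause set \<Rightarrow> bool" where
  "abduction_instance H M T \<longleftrightarrow> finite H \<and> finite M \<and> finite T \<and> T \<subseteq> Pi3 (vars T)"

definition SOL :: "'v set \<Rightarrow> 'v set \<Rightarrow> 'v clause set \<Rightarrow> 'v set set" where
  "SOL H M T = {H'. H' \<subseteq> H \<and> consistent (facts H' \<union> T) \<and> entails_vars (facts H' \<union> T) M}"

section \<open>The reduction f, with fresh variables c(gamma), d(gamma) indexed by gamma in Pi(H u X)\<close>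

definition red_H :: "('v clause \<Rightarrow> 'v) \<Rightarrow> ('v clause \<Rightarrow> 'v) \<Rightarrow> 'v set \<Rightarrow> 'v clause set \<Rightarrow> 'v set" where
  "red_H c d H T = H \<union> c ` Pi3 (H \<union> vars T) \<union> d ` Pi3 (H \<union> vars T)"

definition red_M :: "('v clause \<Rightarrow> 'v) \<Rightarrow> ('v clause \<Rightarrow> 'v) \<Rightarrow> 'v set \<Rightarrow> 'v set \<Rightarrow> 'v clause set \<Rightarrow> 'v set" where
  "red_M c d H M T = M \<union> c ` {g \<in> Pi3 (H \<union> vars T). g \<in> T} \<union> d ` {g \<in> Pi3 (H \<union> vars T). g \<notin> T}"

definition red_T :: "('v clause \<Rightarrow> 'v) \<Rightarrow> ('v clause \<Rightarrow> 'v) \<Rightarrow> 'v set \<Rightarrow> 'v clause set \<Rightarrow> 'v clause set" where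
  "red_T c d H T =
     {{Neg (c g), Neg (d g)} | g. g \<in> Pi3 (H \<union> vars T)}
   \<union> {insert (Neg (c g)) g | g. g \<in> Pi3 (H \<union> vars T)}"

end

theory Submission
  imports Defs
begin

lemma clause_sat_Pos: "clause_sat \<sigma> {Pos a} = \<sigma> a"
  by (simp add: clause_sat_def)

lemma clause_sat_empty: "clause_sat \<sigma> {} = False"
  by (simp add: clause_sat_def)

lemma clause_sat_NN: "clause_sat \<sigma> {Neg x, Neg y} = (\<not> \<sigma> x \<or> \<not> \<sigma> y)"
  by (simp add: clause_sat_def)

lemma clause_sat_insN: "clause_sat \<sigma> (insert (Neg x) g) = (\<not> \<sigma> x \<or> clause_sat \<sigma> g)"
  by (simp add: clause_sat_def)

lemma models_facts_Un: "models \<sigma> (facts A \<union> B) \<longleftrightarrow> (\<forall>a\<in>A. \<sigma> a) \<and> models \<sigma> B"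
proof -
  have "models \<sigma> (facts A \<union> B) \<longleftrightarrow> (\<forall>a\<in>A. clause_sat \<sigma> {Pos a}) \<and> models \<sigma> B"
    unfolding models_def facts_def by blast
  then show ?thesis by (simp add: clause_sat_Pos)
qed

lemma models_redT: "models \<sigma> (red_T c d H T) \<longleftrightarrow>
   (\<forall>g\<in>Pi3 (H \<union> vars T). \<not> \<sigma> (c g) \<or> \<not> \<sigma> (d g)) \<and>
   (\<forall>g\<in>Pi3 (H \<union> vars T). \<sigma> (c g) \<longrightarrow> clause_sat \<sigma> g)"
proof -
  let ?P = "Pi3 (H \<union> vars T)"
  have "models \<sigma> (red_T c d H T) \<longleftrightarrow>
    (\<forall>g\<in>?P. clause_sat \<sigma> {Neg (c g), Neg (d g)}) \<and> (\<forall>g\<in>?P. clause_sat \<sigma> (insert (Neg (c g)) g))"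
    unfolding models_def red_T_def by blast
  then show ?thesis by (simp add: clause_sat_insN clause_sat_empty)
qed

lemma clause_sat_agree:
  assumes "\<forall>l\<in>C. \<sigma> (lvar l) = \<tau> (lvar l)"
  shows "clause_sat \<sigma> C = clause_sat \<tau> C"
proof -
  have "\<forall>l\<in>C. lit_sat \<sigma> l = lit_sat \<tau> l"
  proof
    fix l assume "l \<in> C" then show "lit_sat \<sigma> l = lit_sat \<tau> l" using assms by (cases l) auto
  qed
  then show ?thesis unfolding clause_sat_def by auto
qed

lemma Pi3_vars: "g \<in> Pi3 Y \<Longrightarrow> l \<in> g \<Longrightarrow> lvar l \<in> Y"
  by (auto simp: Pi3_def)

theorem lemma1:
  fixes H M :: "'v set" and T :: "'v clause set" and c d :: "'v clause \<Rightarrow> 'v"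
  assumes inst: "abduction_instance H M T"
    and c_inj: "inj_on c (Pi3 (H \<union> vars T))"
    and d_inj: "inj_on d (Pi3 (H \<union> vars T))"
    and cd_disj: "c ` Pi3 (H \<union> vars T) \<inter> d ` Pi3 (H \<union> vars T) = {}"
    and fresh: "(c ` Pi3 (H \<union> vars T) \<union> d ` Pi3 (H \<union> vars T)) \<inter> (H \<union> vars T \<union> M) = {}"
  shows "SOL (red_H c d H T) (red_M c d H M T) (red_T c d H T) =
         (\<lambda>S. S \<union> c ` {g \<in> Pi3 (H \<union> vars T). g \<in> T} \<union> d ` {g \<in> Pi3 (H \<union> vars T). g \<notin> T})
           ` SOL H M T"
proof -
  define P where "P = Pi3 (H \<union> vars T)"
  define CT where "CT = c ` {g \<in> P. g \<in> T}"
  define DN where "DN = d ` {g \<in> P. g \<notin> T}"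
  have TP: "T \<subseteq> P"
    using inst unfolding abduction_instance_def P_def Pi3_def by auto
  have gvars: "\<And>g l. g \<in> P \<Longrightarrow> l \<in> g \<Longrightarrow> lvar l \<in> H \<union> vars T"
    unfolding P_def by (rule Pi3_vars)
  have Tvars: "\<And>g l. g \<in> T \<Longrightarrow> l \<in> g \<Longrightarrow> lvar l \<in> vars T"
    unfolding vars_def by auto
  have fr: "\<And>v. v \<in> c ` P \<union> d ` P \<Longrightarrow> v \<notin> H \<union> vars T \<union> M"
    using fresh unfolding P_def by blast
  have redH: "red_H c d H T = H \<union> c ` P \<union> d ` P" unfolding red_H_def P_def by simp
  have redM: "red_M c d H M T = M \<union> CT \<union> DN" unfolding red_M_def CT_def DN_def P_def by simp
  have redT: "\<And>\<sigma>. models \<sigma> (red_T c d H T) \<longleftrightarrow>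
     (\<forall>g\<in>P. \<not> \<sigma> (c g) \<or> \<not> \<sigma> (d g)) \<and> (\<forall>g\<in>P. \<sigma> (c g) \<longrightarrow> clause_sat \<sigma> g)"
    unfolding P_def by (rule models_redT)
  define ext where "ext \<sigma> v = (if v \<in> c ` P then inv_into P c v \<in> T
      else if v \<in> d ` P then inv_into P d v \<notin> T else \<sigma> v)" for \<sigma> :: "'v \<Rightarrow> bool" and v
  have ext_c: "\<And>\<sigma> g. g \<in> P \<Longrightarrow> ext \<sigma> (c g) = (g \<in> T)"
    unfolding ext_def using c_inj unfolding P_def[symmetric] by (auto simp: inv_into_f_f)
  have ext_d: "\<And>\<sigma> g. g \<in> P \<Longrightarrow> ext \<sigma> (d g) = (g \<notin> T)"
  proof -
    fix \<sigma> g assume g: "g \<in> P"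
    have "d g \<notin> c ` P" using cd_disj g unfolding P_def by blast
    then show "ext \<sigma> (d g) = (g \<notin> T)"
      unfolding ext_def using d_inj g unfolding P_def[symmetric] by (auto simp: inv_into_f_f)
  qed
  have ext_o: "\<And>\<sigma> v. v \<in> H \<union> vars T \<union> M \<Longrightarrow> ext \<sigma> v = \<sigma> v"
  proof -
    fix \<sigma> v assume "v \<in> H \<union> vars T \<union> M"
    then have "v \<notin> c ` P" "v \<notin> d ` P" using fr by blast+
    then show "ext \<sigma> v = \<sigma> v" by (simp add: ext_def)
  qed
  have ext_models: "models (ext \<sigma>) (facts (S \<union> CT \<union> DN) \<union> red_T c d H T)"
    if S: "S \<subseteq> H" and m: "models \<sigma> (facts S \<union> T)" for S \<sigma>
  proof -
    have mT: "models \<sigma> T" and mS: "\<forall>a\<in>S. \<sigma> a" using m unfolding models_facts_Un by auto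
    have "\<forall>a\<in>S \<union> CT \<union> DN. ext \<sigma> a"
    proof
      fix a assume "a \<in> S \<union> CT \<union> DN"
      then show "ext \<sigma> a" unfolding CT_def DN_def using ext_c ext_d ext_o mS S by auto
    qed
    moreover have "\<forall>g\<in>P. \<not> ext \<sigma> (c g) \<or> \<not> ext \<sigma> (d g)" using ext_c ext_d by auto
    moreover have "\<forall>g\<in>P. ext \<sigma> (c g) \<longrightarrow> clause_sat (ext \<sigma>) g"
    proof (intro ballI impI)
      fix g assume g: "g \<in> P" and "ext \<sigma> (c g)"
      then have gT: "g \<in> T" using ext_c by auto
      then have "clause_sat \<sigma> g" using mT unfolding models_def by auto
      moreover have "\<forall>l\<in>g. ext \<sigma> (lvar l) = \<sigma> (lvar l)" using gvars g ext_o by blast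
      ultimately show "clause_sat (ext \<sigma>) g" using clause_sat_agree by metis
    qed
    ultimately show ?thesis unfolding models_facts_Un redT by blast
  qed
  have restr: "models \<tau> (facts S \<union> T)"
    if m: "models \<tau> (facts A \<union> red_T c d H T)" and CA: "CT \<subseteq> A" and SA: "S \<subseteq> A" for \<tau> A S
  proof -
    have mA: "\<forall>a\<in>A. \<tau> a" and mR: "models \<tau> (red_T c d H T)" using m unfolding models_facts_Un by auto
    have "models \<tau> T"
      unfolding models_def
    proof
      fix g assume g: "g \<in> T"
      then have "c g \<in> A" using CA TP unfolding CT_def by auto
      then show "clause_sat \<tau> g" using mA mR g TP unfolding redT by blast
    qed
    then show ?thesis using mA SA unfolding models_facts_Un by blast
  qed
  have falsify: "models (\<sigma>(v := False)) (facts A \<union> red_T c d H T)"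
    if m: "models \<sigma> (facts A \<union> red_T c d H T)" and v: "v \<in> c ` P \<union> d ` P" and vA: "v \<notin> A" for \<sigma> A v
  proof -
    have mA: "\<forall>a\<in>A. \<sigma> a" and mR: "models \<sigma> (red_T c d H T)" using m unfolding models_facts_Un by auto
    have "\<forall>a\<in>A. (\<sigma>(v := False)) a" using mA vA by auto
    moreover have "\<forall>g\<in>P. \<not> (\<sigma>(v := False)) (c g) \<or> \<not> (\<sigma>(v := False)) (d g)"
      using mR unfolding redT by auto
    moreover have "\<forall>g\<in>P. (\<sigma>(v := False)) (c g) \<longrightarrow> clause_sat (\<sigma>(v := False)) g"
    proof (intro ballI impI)
      fix g assume g: "g \<in> P" and "(\<sigma>(v := False)) (c g)"
      then have "\<sigma> (c g)" by (auto split: if_splits)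
      then have "clause_sat \<sigma> g" using mR g unfolding redT by blast
      moreover have "\<forall>l\<in>g. (\<sigma>(v := False)) (lvar l) = \<sigma> (lvar l)"
      proof
        fix l assume "l \<in> g"
        then have "lvar l \<in> H \<union> vars T" using gvars g by blast
        moreover have "v \<notin> H \<union> vars T" using fr[OF v] by blast
        ultimately show "(\<sigma>(v := False)) (lvar l) = \<sigma> (lvar l)" by auto
      qed
      ultimately show "clause_sat (\<sigma>(v := False)) g" using clause_sat_agree by metis
    qed
    ultimately show ?thesis unfolding models_facts_Un redT by blast
  qed
  show ?thesis
    unfolding CT_def[symmetric] DN_def[symmetric] P_def[symmetric]
  proof
    show "SOL (red_H c d H T) (red_M c d H M T) (red_T c d H T) \<subseteq> (\<lambda>S. S \<union> CT \<union> DN) ` SOL H M T"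
    proof
      fix A assume "A \<in> SOL (red_H c d H T) (red_M c d H M T) (red_T c d H T)"
      then have AH: "A \<subseteq> H \<union> c ` P \<union> d ` P"
        and cons: "consistent (facts A \<union> red_T c d H T)"
        and ent: "entails_vars (facts A \<union> red_T c d H T) (M \<union> CT \<union> DN)"
        unfolding SOL_def redH redM by auto
      obtain \<sigma>0 where m0: "models \<sigma>0 (facts A \<union> red_T c d H T)"
        using cons unfolding consistent_def by blast
      have inA: "v \<in> A" if v: "v \<in> CT \<union> DN" for v
      proof (rule ccontr)
        assume "v \<notin> A"
        moreover have "v \<in> c ` P \<union> d ` P" using v unfolding CT_def DN_def by auto
        ultimately have "models (\<sigma>0(v := False)) (facts A \<union> red_T c d H T)"
          using falsify m0 by blast
        then have "(\<sigma>0(v := False)) v" using ent v unfolding entails_vars_def by blast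
        then show False by simp
      qed
      have mA: "\<forall>a\<in>A. \<sigma>0 a" and mR: "models \<sigma>0 (red_T c d H T)" using m0 unfolding models_facts_Un by auto
      have notc: "c g \<notin> A" if "g \<in> P" "g \<notin> T" for g
      proof
        assume "c g \<in> A"
        moreover have "d g \<in> A" using inA that unfolding DN_def by auto
        ultimately show False using mA mR that unfolding redT by blast
      qed
      have notd: "d g \<notin> A" if "g \<in> P" "g \<in> T" for g
      proof
        assume "d g \<in> A"
        moreover have "c g \<in> A" using inA that unfolding CT_def by auto
        ultimately show False using mA mR that unfolding redT by blast
      qed
      define S where "S = A \<inter> H"
      have Aeq: "A = S \<union> CT \<union> DN"
      proof
        show "A \<subseteq> S \<union> CT \<union> DN"
        proof
          fix x assume x: "x \<in> A"
          show "x \<in> S \<union> CT \<union> DN"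
          proof (cases "x \<in> H")
            case True then show ?thesis using x S_def by auto
          next
            case False
            then consider g where "g \<in> P" "x = c g" | g where "g \<in> P" "x = d g" using AH x by auto
            then show ?thesis
            proof cases
              case 1 then show ?thesis using notc x unfolding CT_def by blast
            next
              case 2 then show ?thesis using notd x unfolding DN_def by blast
            qed
          qed
        qed
        show "S \<union> CT \<union> DN \<subseteq> A" using inA S_def by auto
      qed
      have "S \<in> SOL H M T"
        unfolding SOL_def
      proof (intro CollectI conjI)
        show "S \<subseteq> H" using S_def by auto
        have CA: "CT \<subseteq> A" using inA by blast
        have SA: "S \<subseteq> A" by (simp add: S_def)
        show "consistent (facts S \<union> T)" unfolding consistent_def
          using restr[OF m0 CA SA] by blast
        show "entails_vars (facts S \<union> T) M"
          unfolding entails_vars_def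
        proof (intro allI impI ballI)
          fix \<sigma> m assume ms: "models \<sigma> (facts S \<union> T)" and m: "m \<in> M"
          have SH: "S \<subseteq> H" by (simp add: S_def)
          have "models (ext \<sigma>) (facts (S \<union> CT \<union> DN) \<union> red_T c d H T)"
            by (rule ext_models[OF SH ms])
          then have "models (ext \<sigma>) (facts A \<union> red_T c d H T)" using Aeq by simp
          then have "ext \<sigma> m" using ent m unfolding entails_vars_def by blast
          then show "\<sigma> m" using ext_o m by auto
        qed
      qed
      then show "A \<in> (\<lambda>S. S \<union> CT \<union> DN) ` SOL H M T" using Aeq by blast
    qed
    show "(\<lambda>S. S \<union> CT \<union> DN) ` SOL H M T \<subseteq> SOL (red_H c d H T) (red_M c d H M T) (red_T c d H T)"
    proof
      fix A assume "A \<in> (\<lambda>S. S \<union> CT \<union> DN) ` SOL H M T"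
      then obtain S where S: "S \<in> SOL H M T" and A: "A = S \<union> CT \<union> DN" by blast
      have SH: "S \<subseteq> H" and cons: "consistent (facts S \<union> T)"
        and ent: "entails_vars (facts S \<union> T) M" using S unfolding SOL_def by auto
      show "A \<in> SOL (red_H c d H T) (red_M c d H M T) (red_T c d H T)"
        unfolding SOL_def redH redM
      proof (intro CollectI conjI)
        show "A \<subseteq> H \<union> c ` P \<union> d ` P" using A SH unfolding CT_def DN_def by auto
        show "consistent (facts A \<union> red_T c d H T)"
          using cons ext_models[OF SH] A unfolding consistent_def by blast
        show "entails_vars (facts A \<union> red_T c d H T) (M \<union> CT \<union> DN)"
          unfolding entails_vars_def
        proof (intro allI impI ballI)
          fix \<tau> m assume mt: "models \<tau> (facts A \<union> red_T c d H T)" and m: "m \<in> M \<union> CT \<union> DN"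
          show "\<tau> m"
          proof (cases "m \<in> M")
            case True
            have "models \<tau> (facts S \<union> T)" using restr[OF mt] A by blast
            then show ?thesis using ent True unfolding entails_vars_def by blast
          next
            case False
            then have "m \<in> A" using m A by auto
            then show ?thesis using mt unfolding models_facts_Un by blast
          qed
        qed
      qed
    qed
  qed
qed

end
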